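(* Let $n\geq 2$, $\sigma\in S_n$ and $I\sqcup J=[2,n]$. If $A^\sigma_{[2,n],\emptyset}=A^{\mathrm{id}}_{I,J}$, then $A^{\rho\sigma}_{[2,n],\emptyset}=A^{\rho}_{I,J}$ for every $\rho\in S_n$.
   Context: Let $w_{ij}$, $1\leq i,j\leq n$, be formal variables subject only to $w_{ij}+w_{ji}=0$. Let $[2,n]=\{2,\dots,n\}$. For $\sigma\in S_n$ and a disjoint decomposition $I\sqcup J=[2,n]$, set $$A^\sigma_{I,J}:=\sum_{i\in I}\sum_{\ell=1}^{i-1}w_{\sigma(\ell)\sigma(i)}-\sum_{j\in J}\sum_{\ell=1}^{j-1}w_{\sigma(\ell)\sigma(j)}.$$ Permutations are composed right-to-left: $(\rho\sigma)(k)=\rho(\sigma(k))$. *)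

theory Defs
  imports "HOL-Combinatorics.Permutations" "HOL-Library.Function_Algebras"
begin

text \<open>The formal variables w_ij subject only to w_ij + w_ji = 0 are modelled as
  elements of the free abelian group on the pairs (i,j) with i < j, represented by
  integer coefficient functions on nat \<times> nat. The variable w_ab is the basis vector
  at (a,b) if a < b and minus the basis vector at (b,a) if b < a (and 0 if a = b).\<close>

definition wvar :: "nat \<Rightarrow> nat \<Rightarrow> (nat \<times> nat \<Rightarrow> int)" where
  "wvar a b = (\<lambda>p. if a < b \<and> p = (a, b) then 1
                    else if b < a \<and> p = (b, a) then -1 else 0)"

definition Aexpr :: "(nat \<Rightarrow> nat) \<Rightarrow> nat set \<Rightarrow> nat set \<Rightarrow> (nat \<times> nat \<Rightarrow> int)" where
  "Aexpr \<sigma> I J =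
     (\<Sum>i\<in>I. \<Sum>l\<in>{1..<i}. wvar (\<sigma> l) (\<sigma> i))
   - (\<Sum>j\<in>J. \<Sum>l\<in>{1..<j}. wvar (\<sigma> l) (\<sigma> j))"

end

theory Submission
  imports Defs
begin

definition Lmap :: "(nat \<Rightarrow> nat) \<Rightarrow> nat \<Rightarrow> (nat \<times> nat \<Rightarrow> int) \<Rightarrow> (nat \<times> nat \<Rightarrow> int)" where
  "Lmap \<rho> n f = (\<lambda>q. \<Sum>p\<in>{1..n}\<times>{1..n}. f p * wvar (\<rho> (fst p)) (\<rho> (snd p)) q)"

lemma Lmap_wvar:
  assumes "x \<in> {1..n}" "y \<in> {1..n}"
  shows "Lmap \<rho> n (wvar x y) = wvar (\<rho> x) (\<rho> y)"
proof (rule ext)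
  fix q
  consider "x < y" | "y < x" | "x = y" by linarith
  then show "Lmap \<rho> n (wvar x y) q = wvar (\<rho> x) (\<rho> y) q"
  proof cases
    case 1
    have "Lmap \<rho> n (wvar x y) q = (\<Sum>p\<in>{1..n}\<times>{1..n}. if p = (x,y) then wvar (\<rho> (fst p)) (\<rho> (snd p)) q else 0)"
      unfolding Lmap_def using 1 by (intro sum.cong) (auto simp: wvar_def)
    also have "\<dots> = wvar (\<rho> x) (\<rho> y) q" using assms by (subst sum.delta) auto
    finally show ?thesis .
  next
    case 2
    have "Lmap \<rho> n (wvar x y) q = (\<Sum>p\<in>{1..n}\<times>{1..n}. if p = (y,x) then - wvar (\<rho> (fst p)) (\<rho> (snd p)) q else 0)"
      unfolding Lmap_def using 2 by (intro sum.cong) (auto simp: wvar_def)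
    also have "\<dots> = - wvar (\<rho> y) (\<rho> x) q" using assms by (subst sum.delta) auto
    also have "\<dots> = wvar (\<rho> x) (\<rho> y) q" by (auto simp: wvar_def)
    finally show ?thesis .
  next
    case 3
    then show ?thesis unfolding Lmap_def by (simp add: wvar_def)
  qed
qed

lemma Lmap_diff: "Lmap \<rho> n (f - g) = Lmap \<rho> n f - Lmap \<rho> n g"
  unfolding Lmap_def by (rule ext) (simp add: left_diff_distrib sum_subtractf)

lemma sum_fun_app: "(\<Sum>i\<in>A. g i) x = (\<Sum>i\<in>A. g i x)"
  by (induction A rule: infinite_finite_induct) auto

lemma Lmap_sum: "Lmap \<rho> n (\<Sum>i\<in>A. g i) = (\<Sum>i\<in>A. Lmap \<rho> n (g i))"
  unfolding Lmap_def by (rule ext) (simp add: sum_fun_app sum_distrib_right sum.swap[of _ A])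

lemma Lmap_Aexpr:
  assumes "\<And>k. k \<in> {1..n} \<Longrightarrow> f k \<in> {1..n}" "I \<subseteq> {2..n}" "J \<subseteq> {2..n}"
  shows "Lmap \<rho> n (Aexpr f I J) = Aexpr (\<rho> \<circ> f) I J"
proof -
  have fI: "finite I" "finite J" using assms(2,3) finite_subset by auto
  have *: "Lmap \<rho> n (\<Sum>i\<in>K. \<Sum>l\<in>{1..<i}. wvar (f l) (f i))
        = (\<Sum>i\<in>K. \<Sum>l\<in>{1..<i}. wvar ((\<rho> \<circ> f) l) ((\<rho> \<circ> f) i))" if "K \<subseteq> {2..n}" "finite K" for K
  proof -
    have "Lmap \<rho> n (\<Sum>i\<in>K. \<Sum>l\<in>{1..<i}. wvar (f l) (f i))
        = (\<Sum>i\<in>K. \<Sum>l\<in>{1..<i}. Lmap \<rho> n (wvar (f l) (f i)))"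
      using that by (simp add: Lmap_sum)
    also have "\<dots> = (\<Sum>i\<in>K. \<Sum>l\<in>{1..<i}. wvar ((\<rho> \<circ> f) l) ((\<rho> \<circ> f) i))"
    proof (intro sum.cong refl)
      fix i l assume "i \<in> K" "l \<in> {1..<i}"
      then have "i \<in> {1..n}" "l \<in> {1..n}" using that by auto
      then show "Lmap \<rho> n (wvar (f l) (f i)) = wvar ((\<rho> \<circ> f) l) ((\<rho> \<circ> f) i)"
        using assms(1) Lmap_wvar by simp
    qed
    finally show ?thesis .
  qed
  show ?thesis unfolding Aexpr_def Lmap_diff using * assms fI by simp
qed

theorem lemma3p6:
  fixes n :: nat and \<sigma> :: "nat \<Rightarrow> nat" and I J :: "nat set"
  assumes "n \<ge> 2"
    and "\<sigma> permutes {1..n}"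
    and "I \<union> J = {2..n}" and "I \<inter> J = {}"
    and "Aexpr \<sigma> {2..n} {} = Aexpr id I J"
  shows "\<forall>\<rho>. \<rho> permutes {1..n} \<longrightarrow> Aexpr (\<rho> \<circ> \<sigma>) {2..n} {} = Aexpr \<rho> I J"
proof (intro allI impI)
  fix \<rho> :: "nat \<Rightarrow> nat"
  have s: "\<And>k. k \<in> {1..n} \<Longrightarrow> \<sigma> k \<in> {1..n}" using permutes_in_image[OF assms(2)] by blast
  have "Aexpr (\<rho> \<circ> \<sigma>) {2..n} {} = Lmap \<rho> n (Aexpr \<sigma> {2..n} {})"
    using Lmap_Aexpr[OF s] by simp
  also have "\<dots> = Lmap \<rho> n (Aexpr id I J)" using assms(5) by simp
  also have "\<dots> = Aexpr (\<rho> \<circ> id) I J"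
    by (rule Lmap_Aexpr) (use assms(3) in auto)
  finally show "Aexpr (\<rho> \<circ> \<sigma>) {2..n} {} = Aexpr \<rho> I J" by simp
qed

end
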